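(* Let $H \in \mathcal{M}_n(\mathbb{C})$ be a positive semidefinite matrix whose least eigenvalue is simple. Then $H$ has exactly $k$ distinct eigenvalues, where $2 \le k \le n$, if and only if there are $k$ distinct real numbers $\mu_1, \ldots, \mu_k$ such that (i) $H - \mu_i I$ is a singular matrix for every $1 \le i \le k-1$; and (ii) $\prod_{i=1}^{k-1}(H - \mu_i I) = \frac{\prod_{i=1}^{k-1}(\mu_k - \mu_i)}{\|\alpha\|_2^2}\,\alpha\alpha^\ast$ and $H\alpha = \mu_k\alpha$ for some $\alpha \in \mathbb{C}^n\setminus\{\mathbf{0}\}$. Moreover, in this case $\mu_1, \ldots, \mu_k$ are exactly the $k$ distinct eigenvalues of $H$.
   Context: $\mathcal{M}_n(\mathbb{C})$ is the set of $n\times n$ complex matrices, $I$ the identity matrix, $\alpha^\ast = \overline{\alpha}^T$ and $\|\alpha\|_2^2 = \alpha^\ast\alpha$. A simple eigenvalue is one of algebraic multiplicity $1$. *)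

theory Defs
  imports "Jordan_Normal_Form.Jordan_Normal_Form" "Jordan_Normal_Form.Schur_Decomposition"
begin

definition psd_mat :: "complex mat \<Rightarrow> nat \<Rightarrow> bool" where
  "psd_mat H n \<longleftrightarrow> H \<in> carrier_mat n n \<and> mat_adjoint H = H \<and>
     (\<forall>x \<in> carrier_vec n. Im ((H *\<^sub>v x) \<bullet>c x) = 0 \<and> Re ((H *\<^sub>v x) \<bullet>c x) \<ge> 0)"

definition simple_eigenvalue :: "complex mat \<Rightarrow> complex \<Rightarrow> bool" where
  "simple_eigenvalue H l \<longleftrightarrow> eigenvalue H l \<and> Polynomial.order l (char_poly H) = 1"

text \<open>The least eigenvalue of a Hermitian matrix (eigenvalues are real) is simple.\<close>
definition least_eigenvalue_simple :: "complex mat \<Rightarrow> bool" where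
  "least_eigenvalue_simple H \<longleftrightarrow>
     (\<exists>l. eigenvalue H l \<and> (\<forall>m. eigenvalue H m \<longrightarrow> Re l \<le> Re m) \<and> simple_eigenvalue H l)"

definition mat_list_prod :: "nat \<Rightarrow> complex mat list \<Rightarrow> complex mat" where
  "mat_list_prod n Ms = foldr (*) Ms (1\<^sub>m n)"

definition outer_adj :: "complex vec \<Rightarrow> complex mat" where
  "outer_adj a = mat (dim_vec a) (dim_vec a) (\<lambda>(i,j). a $ i * cnj (a $ j))"

end

theory Submission
  imports Defs "Jordan_Normal_Form.Jordan_Normal_Form_Existence" "Jordan_Normal_Form.Jordan_Normal_Form_Uniqueness"
begin

definition herm_m :: "complex mat \<Rightarrow> nat \<Rightarrow> bool" where
  "herm_m H n \<longleftrightarrow> (\<forall>i<n. \<forall>j<n. H $$ (i,j) = cnj (H $$ (j,i)))"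

lemma herm_mD: "herm_m H n \<Longrightarrow> i < n \<Longrightarrow> j < n \<Longrightarrow> H $$ (i,j) = cnj (H $$ (j,i))"
  unfolding herm_m_def by blast

lemma herm_entry:
  assumes "H \<in> carrier_mat n n" "mat_adjoint H = H" "i < n" "j < n"
  shows "H $$ (i,j) = cnj (H $$ (j,i))"
proof -
  have "mat_adjoint H $$ (i,j) = cnj (H $$ (j,i))"
    using assms(1,3,4) unfolding mat_adjoint_def by (simp add: mat_of_rows_def)
  thus ?thesis using assms(2) by simp
qed

lemma herm_inner:
  assumes H: "H \<in> carrier_mat n n" and hh: "herm_m H n"
    and x: "x \<in> carrier_vec n" and y: "y \<in> carrier_vec n"
  shows "(H *\<^sub>v x) \<bullet>c y = x \<bullet>c (H *\<^sub>v y)"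
proof -
  have "(H *\<^sub>v x) \<bullet>c y = (\<Sum>i<n. (\<Sum>j<n. H $$ (i,j) * x $ j) * cnj (y $ i))"
    using H x y by (simp add: scalar_prod_def mult_mat_vec_def row_def lessThan_atLeast0)
  also have "\<dots> = (\<Sum>i<n. \<Sum>j<n. H $$ (i,j) * x $ j * cnj (y $ i))"
    by (simp add: sum_distrib_right)
  also have "\<dots> = (\<Sum>j<n. \<Sum>i<n. H $$ (i,j) * x $ j * cnj (y $ i))"
    by (rule sum.swap)
  also have "\<dots> = (\<Sum>j<n. x $ j * cnj (\<Sum>i<n. H $$ (j,i) * y $ i))"
  proof (rule sum.cong[OF refl])
    fix j assume j: "j \<in> {..<n}"
    have "(\<Sum>i<n. H $$ (i,j) * x $ j * cnj (y $ i)) = (\<Sum>i<n. x $ j * cnj (H $$ (j,i) * y $ i))"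
    proof (rule sum.cong[OF refl])
      fix i assume i: "i \<in> {..<n}"
      show "H $$ (i,j) * x $ j * cnj (y $ i) = x $ j * cnj (H $$ (j,i) * y $ i)"
        using herm_mD[OF hh, of i j] i j by simp
    qed
    also have "\<dots> = x $ j * cnj (\<Sum>i<n. H $$ (j,i) * y $ i)"
      by (simp add: sum_distrib_left)
    finally show "(\<Sum>i<n. H $$ (i,j) * x $ j * cnj (y $ i)) = x $ j * cnj (\<Sum>i<n. H $$ (j,i) * y $ i)" .
  qed
  also have "\<dots> = x \<bullet>c (H *\<^sub>v y)"
    using H x y by (simp add: scalar_prod_def mult_mat_vec_def row_def lessThan_atLeast0)
  finally show ?thesis .
qed
lemma mlp_carrier: fixes Ms :: "complex mat list" shows "(\<And>M. M \<in> set Ms \<Longrightarrow> M \<in> carrier_mat n n) \<Longrightarrow> mat_list_prod n Ms \<in> carrier_mat n n"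
  unfolding mat_list_prod_def
proof (induct Ms)
  case (Cons a Ms)
  have "a \<in> carrier_mat n n" "foldr (*) Ms (1\<^sub>m n) \<in> carrier_mat n n" using Cons by auto
  then show ?case by simp
qed simp

lemma shift_apply:
  fixes H :: "complex mat"
  assumes H: "H \<in> carrier_mat n n" and v: "v \<in> carrier_vec n" and ev: "H *\<^sub>v v = l \<cdot>\<^sub>v v"
  shows "(H - c \<cdot>\<^sub>m 1\<^sub>m n) *\<^sub>v v = (l - c) \<cdot>\<^sub>v v"
proof -
  have 1: "(c \<cdot>\<^sub>m 1\<^sub>m n) *\<^sub>v v = c \<cdot>\<^sub>v v"
  proof (rule eq_vecI)
    fix i assume "i < dim_vec (c \<cdot>\<^sub>v v)"
    hence i: "i < n" using v by simp
    have "(c \<cdot>\<^sub>v unit_vec n i) \<bullet> v = c * (unit_vec n i \<bullet> v)"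
      by (rule smult_scalar_prod_distrib) (use v in auto)
    thus "((c \<cdot>\<^sub>m 1\<^sub>m n) *\<^sub>v v) $ i = (c \<cdot>\<^sub>v v) $ i" using i v by simp
  qed (use v in simp)
  have "(H - c \<cdot>\<^sub>m 1\<^sub>m n) *\<^sub>v v = H *\<^sub>v v - (c \<cdot>\<^sub>m 1\<^sub>m n) *\<^sub>v v"
    by (rule minus_mult_distrib_mat_vec[OF H _ v]) simp
  also have "\<dots> = (l - c) \<cdot>\<^sub>v v" unfolding 1 ev using v by (intro eq_vecI) (auto simp: algebra_simps)
  finally show ?thesis .
qed

lemma prod_apply:
  fixes H :: "complex mat"
  assumes H: "H \<in> carrier_mat n n" and v: "v \<in> carrier_vec n" and ev: "H *\<^sub>v v = l \<cdot>\<^sub>v v"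
  shows "mat_list_prod n (map (\<lambda>i. H - f i \<cdot>\<^sub>m 1\<^sub>m n) xs) *\<^sub>v v = (\<Prod>i\<leftarrow>xs. l - f i) \<cdot>\<^sub>v v"
proof (induct xs)
  case Nil
  then show ?case using v by (simp add: mat_list_prod_def)
next
  case (Cons x xs)
  have C: "mat_list_prod n (map (\<lambda>i. H - f i \<cdot>\<^sub>m 1\<^sub>m n) xs) \<in> carrier_mat n n"
    by (rule mlp_carrier) (use H in auto)
  have "mat_list_prod n (map (\<lambda>i. H - f i \<cdot>\<^sub>m 1\<^sub>m n) (x # xs)) = 
        (H - f x \<cdot>\<^sub>m 1\<^sub>m n) * mat_list_prod n (map (\<lambda>i. H - f i \<cdot>\<^sub>m 1\<^sub>m n) xs)"
    by (simp add: mat_list_prod_def)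
  note eq = this
  have X: "H - f x \<cdot>\<^sub>m 1\<^sub>m n \<in> carrier_mat n n" using H by (simp add: minus_carrier_mat)
  have "mat_list_prod n (map (\<lambda>i. H - f i \<cdot>\<^sub>m 1\<^sub>m n) (x # xs)) *\<^sub>v v =
     (H - f x \<cdot>\<^sub>m 1\<^sub>m n) *\<^sub>v ((\<Prod>i\<leftarrow>xs. l - f i) \<cdot>\<^sub>v v)"
  proof -
    show ?thesis unfolding eq using assoc_mult_mat_vec[OF X C v] Cons by simp
  qed
  also have "\<dots> = (\<Prod>i\<leftarrow>xs. l - f i) \<cdot>\<^sub>v ((H - f x \<cdot>\<^sub>m 1\<^sub>m n) *\<^sub>v v)"
    by (rule mult_mat_vec[OF X v])
  also have "\<dots> = (\<Prod>i\<leftarrow>x#xs. l - f i) \<cdot>\<^sub>v v"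
    using shift_apply[OF H v ev] by (simp add: smult_smult_assoc mult.commute)
  finally show ?case .
qed

lemma outer_apply:
  assumes a: "a \<in> carrier_vec n" and v: "v \<in> carrier_vec n"
  shows "outer_adj a *\<^sub>v v = (v \<bullet>c a) \<cdot>\<^sub>v a"
proof (rule eq_vecI)
  show "dim_vec (outer_adj a *\<^sub>v v) = dim_vec ((v \<bullet>c a) \<cdot>\<^sub>v a)" using a by (simp add: outer_adj_def)
  fix i assume "i < dim_vec ((v \<bullet>c a) \<cdot>\<^sub>v a)"
  hence i: "i < n" using a by simp
  have "(outer_adj a *\<^sub>v v) $ i = (\<Sum>j<n. a $ i * cnj (a $ j) * v $ j)"
    using a v i by (simp add: outer_adj_def scalar_prod_def row_def lessThan_atLeast0)
  also have "\<dots> = (v \<bullet>c a) * a $ i"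
    using a v by (simp add: scalar_prod_def lessThan_atLeast0 sum_distrib_right sum_distrib_left mult_ac)
  finally show "(outer_adj a *\<^sub>v v) $ i = ((v \<bullet>c a) \<cdot>\<^sub>v a) $ i" using a i by simp
qed

lemma cnorm: assumes "v \<in> carrier_vec n"
  shows "v \<bullet>c v = complex_of_real (\<Sum>i<n. (cmod (v $ i))^2)"
proof -
  have "v \<bullet>c v = (\<Sum>i<n. v $ i * cnj (v $ i))"
    using assms by (simp add: scalar_prod_def lessThan_atLeast0)
  also have "\<dots> = (\<Sum>i<n. complex_of_real ((cmod (v $ i))^2))"
    by (rule sum.cong[OF refl]) (rule complex_norm_square[symmetric])
  finally show ?thesis by simp
qed

lemma cnorm_pos: assumes "v \<in> carrier_vec n" "v \<noteq> 0\<^sub>v n"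
  shows "(\<Sum>i<n. (cmod (v $ i))^2) > 0"
proof -
  from assms obtain i where i: "i < n" "v $ i \<noteq> 0" by (metis eq_vecI carrier_vecD index_zero_vec(1,2))
  have "(cmod (v $ i))^2 \<le> (\<Sum>i<n. (cmod (v $ i))^2)"
    by (rule member_le_sum) (use i in auto)
  moreover have "(cmod (v $ i))^2 > 0" using i by simp
  ultimately show ?thesis by linarith
qed

lemma smult_one_apply:
  fixes v :: "complex vec"
  assumes v: "v \<in> carrier_vec n"
  shows "(c \<cdot>\<^sub>m 1\<^sub>m n) *\<^sub>v v = c \<cdot>\<^sub>v v"
proof (rule eq_vecI)
  fix i assume "i < dim_vec (c \<cdot>\<^sub>v v)"
  hence i: "i < n" using v by simp
  have "(c \<cdot>\<^sub>v unit_vec n i) \<bullet> v = c * (unit_vec n i \<bullet> v)"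
    by (rule smult_scalar_prod_distrib) (use v in auto)
  thus "((c \<cdot>\<^sub>m 1\<^sub>m n) *\<^sub>v v) $ i = (c \<cdot>\<^sub>v v) $ i" using i v by simp
qed (use v in simp)

lemma smult_mat_apply:
  fixes A :: "complex mat"
  assumes A: "A \<in> carrier_mat n n" and v: "v \<in> carrier_vec n"
  shows "(c \<cdot>\<^sub>m A) *\<^sub>v v = c \<cdot>\<^sub>v (A *\<^sub>v v)"
proof (rule eq_vecI)
  fix i assume "i < dim_vec (c \<cdot>\<^sub>v (A *\<^sub>v v))"
  hence i: "i < n" using A by simp
  have "(c \<cdot>\<^sub>v row A i) \<bullet> v = c * (row A i \<bullet> v)"
    by (rule smult_scalar_prod_distrib) (use v A i in auto)
  thus "((c \<cdot>\<^sub>m A) *\<^sub>v v) $ i = (c \<cdot>\<^sub>v (A *\<^sub>v v)) $ i" using i v A by simp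
qed (use A in simp)

lemma cinner_smult_right:
  fixes v w :: "complex vec"
  assumes "v \<in> carrier_vec n" "w \<in> carrier_vec n"
  shows "v \<bullet>c (a \<cdot>\<^sub>v w) = cnj a * (v \<bullet>c w)"
  using assms by (simp add: scalar_prod_def sum_distrib_left mult_ac)

lemma cinner_smult_left:
  fixes v w :: "complex vec"
  assumes "v \<in> carrier_vec n" "w \<in> carrier_vec n"
  shows "(a \<cdot>\<^sub>v v) \<bullet>c w = a * (v \<bullet>c w)"
  using assms by (simp add: scalar_prod_def sum_distrib_left mult_ac)

lemma smult_zero_vec_iff:
  fixes v :: "complex vec"
  assumes "v \<in> carrier_vec n" "v \<noteq> 0\<^sub>v n" "a \<cdot>\<^sub>v v = 0\<^sub>v n"
  shows "a = 0"
proof -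
  from assms obtain i where i: "i < n" "v $ i \<noteq> 0" by (metis eq_vecI carrier_vecD index_zero_vec(1,2))
  have "(a \<cdot>\<^sub>v v) $ i = 0" using assms(3) i by simp
  thus ?thesis using i assms(1) by simp
qed

lemma eigenvalue_iff:
  fixes H :: "complex mat"
  assumes "H \<in> carrier_mat n n"
  shows "eigenvalue H m \<longleftrightarrow> (\<exists>v. v \<in> carrier_vec n \<and> v \<noteq> 0\<^sub>v n \<and> H *\<^sub>v v = m \<cdot>\<^sub>v v)"
  using assms unfolding eigenvalue_def eigenvector_def by auto

lemma det_zero_eigenvalue:
  fixes H :: "complex mat"
  assumes H: "H \<in> carrier_mat n n"
  shows "det (H - c \<cdot>\<^sub>m 1\<^sub>m n) = 0 \<longleftrightarrow> eigenvalue H c"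
proof -
  have X: "H - c \<cdot>\<^sub>m 1\<^sub>m n \<in> carrier_mat n n" using H by (simp add: minus_carrier_mat)
  have key: "(H - c \<cdot>\<^sub>m 1\<^sub>m n) *\<^sub>v v = 0\<^sub>v n \<longleftrightarrow> H *\<^sub>v v = c \<cdot>\<^sub>v v" if v: "v \<in> carrier_vec n" for v
  proof -
    have "(H - c \<cdot>\<^sub>m 1\<^sub>m n) *\<^sub>v v = H *\<^sub>v v - c \<cdot>\<^sub>v v"
      using minus_mult_distrib_mat_vec[OF H _ v, of "c \<cdot>\<^sub>m 1\<^sub>m n"] smult_one_apply[OF v] by simp
    moreover have "H *\<^sub>v v - c \<cdot>\<^sub>v v = 0\<^sub>v n \<longleftrightarrow> H *\<^sub>v v = c \<cdot>\<^sub>v v"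
    proof
      assume z: "H *\<^sub>v v - c \<cdot>\<^sub>v v = 0\<^sub>v n"
      show "H *\<^sub>v v = c \<cdot>\<^sub>v v"
      proof (rule eq_vecI)
        fix i assume "i < dim_vec (c \<cdot>\<^sub>v v)"
        hence i: "i < n" using v by simp
        have "(H *\<^sub>v v - c \<cdot>\<^sub>v v) $ i = 0\<^sub>v n $ i" using z by simp
        thus "(H *\<^sub>v v) $ i = (c \<cdot>\<^sub>v v) $ i" using i H v by simp
      qed (use H v in simp)
    next
      assume "H *\<^sub>v v = c \<cdot>\<^sub>v v"
      thus "H *\<^sub>v v - c \<cdot>\<^sub>v v = 0\<^sub>v n" using H v by (intro eq_vecI) auto
    qed
    ultimately show ?thesis by simp
  qed
  show ?thesis unfolding det_0_iff_vec_prod_zero[OF X] eigenvalue_iff[OF H] using key by blast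
qed

lemma outer_adj_carrier: "a \<in> carrier_vec n \<Longrightarrow> outer_adj a \<in> carrier_mat n n"
  by (simp add: outer_adj_def)

lemma conv:
  fixes H :: "complex mat" and \<mu> :: "nat \<Rightarrow> real"
  assumes H: "H \<in> carrier_mat n n" and hh: "herm_m H n"
   and sing: "\<forall>i\<in>{1..k-1}. det (H - complex_of_real (\<mu> i) \<cdot>\<^sub>m 1\<^sub>m n) = 0"
   and a: "\<alpha> \<in> carrier_vec n" "\<alpha> \<noteq> 0\<^sub>v n"
   and P: "mat_list_prod n (map (\<lambda>i. H - complex_of_real (\<mu> i) \<cdot>\<^sub>m 1\<^sub>m n) [1..<k]) = c \<cdot>\<^sub>m outer_adj \<alpha>"
   and ev: "H *\<^sub>v \<alpha> = complex_of_real (\<mu> k) \<cdot>\<^sub>v \<alpha>" and k: "1 \<le> k"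
  shows "{m. eigenvalue H m} = (\<lambda>i. complex_of_real (\<mu> i)) ` {1..k}"
proof
  show "(\<lambda>i. complex_of_real (\<mu> i)) ` {1..k} \<subseteq> {m. eigenvalue H m}"
  proof
    fix x assume "x \<in> (\<lambda>i. complex_of_real (\<mu> i)) ` {1..k}"
    then obtain i where i: "i \<in> {1..k}" and x: "x = complex_of_real (\<mu> i)" by auto
    show "x \<in> {m. eigenvalue H m}"
    proof (cases "i = k")
      case True
      thus ?thesis using x a ev eigenvalue_iff[OF H] by auto
    next
      case False
      hence "i \<in> {1..k-1}" using i by auto
      thus ?thesis using sing x det_zero_eigenvalue[OF H] by auto
    qed
  qed
  show "{m. eigenvalue H m} \<subseteq> (\<lambda>i. complex_of_real (\<mu> i)) ` {1..k}"
  proof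
    fix m assume "m \<in> {m. eigenvalue H m}"
    then obtain v where v: "v \<in> carrier_vec n" "v \<noteq> 0\<^sub>v n" and hv: "H *\<^sub>v v = m \<cdot>\<^sub>v v"
      using eigenvalue_iff[OF H] by auto
    show "m \<in> (\<lambda>i. complex_of_real (\<mu> i)) ` {1..k}"
    proof (rule ccontr)
      assume nm: "m \<notin> (\<lambda>i. complex_of_real (\<mu> i)) ` {1..k}"
      hence mk: "m \<noteq> complex_of_real (\<mu> k)" using k by auto
      have "m * (v \<bullet>c \<alpha>) = (H *\<^sub>v v) \<bullet>c \<alpha>" using hv cinner_smult_left[OF v(1) a(1)] by simp
      also have "\<dots> = v \<bullet>c (H *\<^sub>v \<alpha>)" by (rule herm_inner[OF H hh v(1) a(1)])
      also have "\<dots> = complex_of_real (\<mu> k) * (v \<bullet>c \<alpha>)" using ev cinner_smult_right[OF v(1) a(1)] by simp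
      finally have "(m - complex_of_real (\<mu> k)) * (v \<bullet>c \<alpha>) = 0" by (simp add: algebra_simps)
      hence o: "v \<bullet>c \<alpha> = 0" using mk by simp
      have e1: "mat_list_prod n (map (\<lambda>i. H - complex_of_real (\<mu> i) \<cdot>\<^sub>m 1\<^sub>m n) [1..<k]) *\<^sub>v v
          = (\<Prod>i\<leftarrow>[1..<k]. m - complex_of_real (\<mu> i)) \<cdot>\<^sub>v v"
        by (rule prod_apply[OF H v(1) hv])
      have e2: "mat_list_prod n (map (\<lambda>i. H - complex_of_real (\<mu> i) \<cdot>\<^sub>m 1\<^sub>m n) [1..<k]) *\<^sub>v v
          = c \<cdot>\<^sub>v ((v \<bullet>c \<alpha>) \<cdot>\<^sub>v \<alpha>)"
        unfolding P smult_mat_apply[OF outer_adj_carrier[OF a(1)] v(1)] outer_apply[OF a(1) v(1)] ..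
      have z: "c \<cdot>\<^sub>v ((v \<bullet>c \<alpha>) \<cdot>\<^sub>v \<alpha>) = 0\<^sub>v n" using o a(1) by (auto intro!: eq_vecI)
      have "(\<Prod>i\<leftarrow>[1..<k]. m - complex_of_real (\<mu> i)) \<cdot>\<^sub>v v = 0\<^sub>v n"
        using e1 e2 z by simp
      hence "(\<Prod>i\<leftarrow>[1..<k]. m - complex_of_real (\<mu> i)) = 0" by (rule smult_zero_vec_iff[OF v, rotated])
      then obtain i where "i \<in> set [1..<k]" "m = complex_of_real (\<mu> i)"
        by (auto simp: prod_list_zero_iff)
      thus False using nm by auto
    qed
  qed
qed

lemma sum_fst_ones: "\<forall>x\<in>set n_as. fst x = (1::nat) \<Longrightarrow> sum_list (map fst n_as) = length n_as"
  by (induct n_as) auto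

lemma jm_diag:
  fixes n_as :: "(nat \<times> complex) list"
  shows "\<forall>x\<in>set n_as. fst x = 1 \<Longrightarrow> jordan_matrix n_as
    = mat (length n_as) (length n_as) (\<lambda>(i,j). if i = j then snd (n_as ! i) else 0)"
proof (induct n_as)
  case Nil
  show ?case by (rule eq_matI) auto
next
  case (Cons a rest)
  obtain m e where a: "a = (m,e)" by force
  with Cons have m: "m = 1" by auto
  have IH: "jordan_matrix rest = mat (length rest) (length rest) (\<lambda>(i,j). if i = j then snd (rest ! i) else 0)"
    using Cons by auto
  have s: "sum_list (map fst rest) = length rest" using Cons sum_fst_ones by auto
  show ?case unfolding a m jordan_matrix_Cons s IH
    by (rule eq_matI) (auto simp: nth_Cons')
qed

lemma sum_list_eq_mono:
  fixes f g :: "'a \<Rightarrow> nat"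
  shows "(\<forall>x\<in>set L. f x \<le> g x) \<Longrightarrow> sum_list (map f L) = sum_list (map g L) \<Longrightarrow> \<forall>x\<in>set L. f x = g x"
proof (induct L)
  case (Cons a L)
  have "sum_list (map f L) \<le> sum_list (map g L)" using Cons(2) by (intro sum_list_mono) auto
  with Cons show ?case by auto
qed simp

lemma eig_real:
  fixes H :: "complex mat"
  assumes H: "H \<in> carrier_mat n n" and hh: "herm_m H n"
    and ev: "eigenvalue H e"
  shows "cnj e = e"
proof -
  obtain v where v: "v \<in> carrier_vec n" "v \<noteq> 0\<^sub>v n" and hv: "H *\<^sub>v v = e \<cdot>\<^sub>v v"
    using ev eigenvalue_iff[OF H] by auto
  have "e * (v \<bullet>c v) = (H *\<^sub>v v) \<bullet>c v" using hv cinner_smult_left[OF v(1) v(1)] by simp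
  also have "\<dots> = v \<bullet>c (H *\<^sub>v v)" by (rule herm_inner[OF H hh v(1) v(1)])
  also have "\<dots> = cnj e * (v \<bullet>c v)" using hv cinner_smult_right[OF v(1) v(1)] by simp
  finally have "(e - cnj e) * (v \<bullet>c v) = 0" by (simp add: algebra_simps)
  moreover have "v \<bullet>c v \<noteq> 0" using v by simp
  ultimately show ?thesis by simp
qed

lemma kernel_sq:
  fixes H :: "complex mat"
  assumes H: "H \<in> carrier_mat n n" and hh: "herm_m H n"
    and re: "cnj e = e"
  shows "mat_kernel (char_matrix H e ^\<^sub>m 2) = mat_kernel (char_matrix H e ^\<^sub>m 1)"
proof -
  define M where "M = char_matrix H e"
  have M: "M \<in> carrier_mat n n" unfolding M_def using H by simp
  have hM: "M $$ (i,j) = cnj (M $$ (j,i))" if "i < n" "j < n" for i j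
  proof -
    have hh: "cnj (H $$ (j,i)) = H $$ (i,j)" using herm_mD[OF hh that] by simp
    have e1: "M $$ (i,j) = H $$ (i,j) - (if i = j then e else 0)" using H that by (simp add: M_def char_matrix_def)
    have e2: "M $$ (j,i) = H $$ (j,i) - (if j = i then e else 0)" using H that by (simp add: M_def char_matrix_def)
    show ?thesis unfolding e1 e2 by (auto simp: hh re)
  qed
  have hMm: "herm_m M n" unfolding herm_m_def using hM by blast
  have M2: "M ^\<^sub>m 2 = M * M" using M by (simp add: numeral_2_eq_2)
  have M1: "M ^\<^sub>m 1 = M" using M by simp
  have MM: "M * M \<in> carrier_mat n n" using M by simp
  have "mat_kernel (M * M) = mat_kernel M"
  proof (unfold mat_kernel[OF MM] mat_kernel[OF M], intro Collect_cong conj_cong refl)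
    fix v :: "complex vec" assume v: "v \<in> carrier_vec n"
    have a: "(M * M) *\<^sub>v v = M *\<^sub>v (M *\<^sub>v v)" using M v by simp
    show "(M * M *\<^sub>v v = 0\<^sub>v n) = (M *\<^sub>v v = 0\<^sub>v n)"
    proof
      assume z: "M * M *\<^sub>v v = 0\<^sub>v n"
      define w where "w = M *\<^sub>v v"
      have w: "w \<in> carrier_vec n" unfolding w_def using M v by simp
      have "w \<bullet>c w = w \<bullet>c (M *\<^sub>v v)" unfolding w_def ..
      also have "\<dots> = (M *\<^sub>v w) \<bullet>c v" by (rule herm_inner[OF M hMm w v, symmetric])
      also have "M *\<^sub>v w = 0\<^sub>v n" using z a w_def by simp
      finally have "w \<bullet>c w = 0" using v by simp
      thus "M *\<^sub>v v = 0\<^sub>v n" using w unfolding w_def by simp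
    next
      assume "M *\<^sub>v v = 0\<^sub>v n"
      moreover have "M *\<^sub>v 0\<^sub>v n = 0\<^sub>v n" by (rule eq_vecI) (use M in auto)
      ultimately show "M * M *\<^sub>v v = 0\<^sub>v n" using a by simp
    qed
  qed
  thus ?thesis unfolding M_def[symmetric] M1 M2 .
qed

lemma dim_gen_12:
  fixes H :: "complex mat"
  assumes H: "H \<in> carrier_mat n n" and hh: "herm_m H n"
    and re: "cnj e = e"
  shows "dim_gen_eigenspace H e 2 = dim_gen_eigenspace H e 1"
proof -
  have d: "dim_col (char_matrix H e ^\<^sub>m 2) = dim_col (char_matrix H e ^\<^sub>m 1)" using H by simp
  have k: "mat_kernel (char_matrix H e ^\<^sub>m 2) = mat_kernel (char_matrix H e ^\<^sub>m 1)" by (rule kernel_sq[OF H hh re])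
  show ?thesis unfolding dim_gen_eigenspace_def kernel_dim_def d k ..
qed

lemma poly_prod_list_map: "poly (prod_list (map f xs)) y = prod_list (map (\<lambda>x. poly (f x) y) xs)"
  by (induct xs) auto

lemma diagonalize:
  fixes H :: "complex mat"
  assumes H: "H \<in> carrier_mat n n" and hh: "herm_m H n"
  shows "\<exists>P Q d. P \<in> carrier_mat n n \<and> Q \<in> carrier_mat n n \<and> P * Q = 1\<^sub>m n \<and> Q * P = 1\<^sub>m n \<and>
     H = P * mat n n (\<lambda>(i,j). if i = j then d i else 0) * Q"
proof -
  obtain as where "char_poly H = (\<Prod>a\<leftarrow>as. [:-a,1:])" using char_poly_factorized[OF H] by auto
  from jordan_nf_exists[OF H this] obtain n_as where jnf: "jordan_nf H n_as" by auto
  have ones: "\<forall>x\<in>set n_as. fst x = 1"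
  proof
    fix x assume x: "x \<in> set n_as"
    obtain m e where xe: "x = (m,e)" by force
    have m0: "m \<noteq> 0" using jnf x xe unfolding jordan_nf_def by force
    have "poly (char_poly H) e = prod_list (map (\<lambda>(n,a). poly ([:-a,1:]^n) e) n_as)"
      unfolding jordan_nf_char_poly[OF jnf] poly_prod_list_map by (simp add: case_prod_unfold)
    also have "\<dots> = 0" unfolding prod_list_zero_iff using x xe m0
      by (auto intro!: image_eqI[of _ _ x] simp: poly_power)
    finally have "eigenvalue H e" using eigenvalue_root_char_poly[OF H] by simp
    hence re: "cnj e = e" using eig_real[OF H hh, of e] by blast
    have "(\<Sum>n\<leftarrow>map fst [(n, e')\<leftarrow>n_as . e' = e]. min 1 n) = (\<Sum>n\<leftarrow>map fst [(n, e')\<leftarrow>n_as . e' = e]. min 2 n)"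
      using dim_gen_12[OF H hh re] unfolding dim_gen_eigenspace[OF jnf] by simp
    hence "\<forall>y\<in>set (map fst [(n, e')\<leftarrow>n_as . e' = e]). min 1 y = min 2 y"
      by (intro sum_list_eq_mono) auto
    moreover have "m \<in> set (map fst [(n, e')\<leftarrow>n_as . e' = e])" using x xe by force
    ultimately have "min 1 m = min 2 m" by blast
    thus "fst x = 1" using m0 xe by auto
  qed
  from jnf have sim: "similar_mat H (jordan_matrix n_as)" unfolding jordan_nf_def by auto
  from similar_matD[OF this] obtain n' P Q where
    wit: "{H, jordan_matrix n_as, P, Q} \<subseteq> carrier_mat n' n'" "P * Q = 1\<^sub>m n'" "Q * P = 1\<^sub>m n'"
      "H = P * jordan_matrix n_as * Q" by blast
  have n': "n' = n" using wit(1) H by auto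
  have len: "length n_as = n" using wit(1) n' jm_diag[OF ones] by auto
  show ?thesis
    by (rule exI[of _ P], rule exI[of _ Q], rule exI[of _ "\<lambda>i. snd (n_as ! i)"])
      (use wit n' len jm_diag[OF ones] in auto)
qed

definition dg :: "nat \<Rightarrow> (nat \<Rightarrow> complex) \<Rightarrow> complex mat" where
  "dg n d = mat n n (\<lambda>(i,j). if i = j then d i else 0)"

lemma dg_carrier[simp]: "dg n d \<in> carrier_mat n n" by (simp add: dg_def)

lemma dg_mult_left:
  assumes A: "A \<in> carrier_mat n m" and i: "i < n" and j: "j < m"
  shows "(dg n d * A) $$ (i,j) = d i * A $$ (i,j)"
proof -
  have "(dg n d * A) $$ (i,j) = (\<Sum>b\<in>{0..<n}. (if i = b then d i else 0) * A $$ (b,j))"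
    using A i j by (simp add: dg_def scalar_prod_def)
  also have "\<dots> = (\<Sum>b\<in>{0..<n}. if b = i then d i * A $$ (i,j) else 0)"
    by (rule sum.cong) auto
  also have "\<dots> = d i * A $$ (i,j)" using i by simp
  finally show ?thesis .
qed

lemma dg_mult_right:
  assumes A: "A \<in> carrier_mat m n" and i: "i < m" and j: "j < n"
  shows "(A * dg n d) $$ (i,j) = A $$ (i,j) * d j"
proof -
  have "(A * dg n d) $$ (i,j) = (\<Sum>b\<in>{0..<n}. A $$ (i,b) * (if b = j then d b else 0))"
    using A i j by (simp add: dg_def scalar_prod_def)
  also have "\<dots> = (\<Sum>b\<in>{0..<n}. if b = j then A $$ (i,j) * d j else 0)"
    by (rule sum.cong) auto
  also have "\<dots> = A $$ (i,j) * d j" using j by simp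
  finally show ?thesis .
qed

lemma dg_mult_vec:
  assumes x: "x \<in> carrier_vec n" and i: "i < n"
  shows "(dg n d *\<^sub>v x) $ i = d i * x $ i"
proof -
  have "(dg n d *\<^sub>v x) $ i = (\<Sum>b\<in>{0..<n}. (if i = b then d i else 0) * x $ b)"
    using x i by (simp add: dg_def scalar_prod_def)
  also have "\<dots> = (\<Sum>b\<in>{0..<n}. if b = i then d i * x $ i else 0)"
    by (rule sum.cong) auto
  also have "\<dots> = d i * x $ i" using i by simp
  finally show ?thesis .
qed

lemma dg_mult: "dg n d * dg n e = dg n (\<lambda>i. d i * e i)"
proof (rule eq_matI)
  fix i j assume "i < dim_row (dg n (\<lambda>i. d i * e i))" "j < dim_col (dg n (\<lambda>i. d i * e i))"
  hence ij: "i < n" "j < n" by (auto simp: dg_def)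
  show "(dg n d * dg n e) $$ (i, j) = dg n (\<lambda>i. d i * e i) $$ (i, j)"
    unfolding dg_mult_left[OF dg_carrier ij] using ij by (simp add: dg_def)
qed (auto simp: dg_def)

lemma dg_shift: "dg n d - c \<cdot>\<^sub>m 1\<^sub>m n = dg n (\<lambda>i. d i - c)"
  by (rule eq_matI) (auto simp: dg_def)

lemma dg_prod: "mat_list_prod n (map (\<lambda>i. dg n d - f i \<cdot>\<^sub>m 1\<^sub>m n) xs) = dg n (\<lambda>a. \<Prod>i\<leftarrow>xs. d a - f i)"
proof (induct xs)
  case Nil
  show ?case by (rule eq_matI) (auto simp: dg_def mat_list_prod_def)
next
  case (Cons x xs)
  have "mat_list_prod n (map (\<lambda>i. dg n d - f i \<cdot>\<^sub>m 1\<^sub>m n) (x#xs))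
     = (dg n d - f x \<cdot>\<^sub>m 1\<^sub>m n) * mat_list_prod n (map (\<lambda>i. dg n d - f i \<cdot>\<^sub>m 1\<^sub>m n) xs)"
    by (simp add: mat_list_prod_def)
  also have "\<dots> = dg n (\<lambda>a. \<Prod>i\<leftarrow>x#xs. d a - f i)" unfolding Cons unfolding dg_shift dg_mult by simp
  finally show ?case .
qed

lemma sim_shift:
  fixes H D P Q :: "complex mat"
  assumes P: "P \<in> carrier_mat n n" and Q: "Q \<in> carrier_mat n n" and D: "D \<in> carrier_mat n n"
    and PQ: "P * Q = 1\<^sub>m n" and QP: "Q * P = 1\<^sub>m n" and HD: "H = P * D * Q"
  shows "H - c \<cdot>\<^sub>m 1\<^sub>m n = P * (D - c \<cdot>\<^sub>m 1\<^sub>m n) * Q"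
proof -
  have H: "H \<in> carrier_mat n n" using HD P Q D by simp
  have wit: "similar_mat_wit H D P Q" unfolding similar_mat_wit_def Let_def using H D P Q PQ QP HD by auto
  from similar_mat_witD2[OF char_matrix_closed[OF H] similar_mat_wit_char_matrix[OF wit, of c]]
  have e: "char_matrix H c = P * char_matrix D c * Q" by simp
  have "\<And>A. A \<in> carrier_mat n n \<Longrightarrow> A - c \<cdot>\<^sub>m 1\<^sub>m n = char_matrix A c"
    by (rule eq_matI) (auto simp: char_matrix_def)
  thus ?thesis using e H D by simp
qed

lemma sim_prod:
  fixes H D P Q :: "complex mat"
  assumes P: "P \<in> carrier_mat n n" and Q: "Q \<in> carrier_mat n n" and D: "D \<in> carrier_mat n n"
    and PQ: "P * Q = 1\<^sub>m n" and QP: "Q * P = 1\<^sub>m n" and HD: "H = P * D * Q"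
  shows "mat_list_prod n (map (\<lambda>i. H - f i \<cdot>\<^sub>m 1\<^sub>m n) xs) = P * mat_list_prod n (map (\<lambda>i. D - f i \<cdot>\<^sub>m 1\<^sub>m n) xs) * Q"
proof (induct xs)
  case Nil
  show ?case using P PQ by (simp add: mat_list_prod_def)
next
  case (Cons x xs)
  define R where "R = mat_list_prod n (map (\<lambda>i. D - f i \<cdot>\<^sub>m 1\<^sub>m n) xs)"
  have R: "R \<in> carrier_mat n n" unfolding R_def by (rule mlp_carrier) (use D in \<open>auto simp: minus_carrier_mat\<close>)
  define X where "X = D - f x \<cdot>\<^sub>m 1\<^sub>m n"
  have X: "X \<in> carrier_mat n n" unfolding X_def using D by (simp add: minus_carrier_mat)
  have QPY: "Q * (P * Y) = Y" if "Y \<in> carrier_mat n m" for Y m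
  proof -
    have "Q * (P * Y) = (Q * P) * Y" using P Q that by simp
    thus ?thesis using QP that by simp
  qed
  have "mat_list_prod n (map (\<lambda>i. H - f i \<cdot>\<^sub>m 1\<^sub>m n) (x#xs)) = (H - f x \<cdot>\<^sub>m 1\<^sub>m n) * mat_list_prod n (map (\<lambda>i. H - f i \<cdot>\<^sub>m 1\<^sub>m n) xs)"
    by (simp add: mat_list_prod_def)
  also have "\<dots> = (P * X * Q) * (P * R * Q)"
    unfolding Cons R_def[symmetric] X_def sim_shift[OF P Q D PQ QP HD, of "f x"] ..
  also have "\<dots> = P * (X * R) * Q"
  proof -
    have PR: "P * R \<in> carrier_mat n n" "P * X \<in> carrier_mat n n" "P * R * Q \<in> carrier_mat n n" using P R X Q by auto
    have a1: "Q * (P * R * Q) = Q * (P * R) * Q" using assoc_mult_mat[OF Q PR(1) Q] by simp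
    have a2: "Q * (P * R) = Q * P * R" using assoc_mult_mat[OF Q P R] by simp
    have a3: "Q * (P * R * Q) = R * Q" unfolding a1 a2 QP using R by simp
    have "(P * X * Q) * (P * R * Q) = P * X * (Q * (P * R * Q))" using assoc_mult_mat[OF PR(2) Q PR(3)] .
    also have "\<dots> = P * X * (R * Q)" unfolding a3 ..
    also have "\<dots> = P * X * R * Q" using assoc_mult_mat[OF PR(2) R Q] by simp
    also have "\<dots> = P * (X * R) * Q" using assoc_mult_mat[OF P X R] by simp
    finally show ?thesis .
  qed
  also have "X * R = mat_list_prod n (map (\<lambda>i. D - f i \<cdot>\<^sub>m 1\<^sub>m n) (x#xs))"
    by (simp add: mat_list_prod_def X_def R_def)
  finally show ?case .
qed

lemma dg_dims[simp]: "dim_row (dg n d) = n" "dim_col (dg n d) = n" by (simp_all add: dg_def)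

lemma order_lin: "Polynomial.order a [:-b, 1:] = (if a = b then 1 else (0::nat))"
proof (cases "a = b")
  case True
  then show ?thesis using order_power_n_n[of a 1] by simp
next
  case False
  hence "poly [:-b, 1:] a \<noteq> 0" by simp
  from order_0I[OF this] False show ?thesis by simp
qed

lemma order_prod_lin: "Polynomial.order a (\<Prod>i\<leftarrow>xs. [:- f i, 1:]) = length (filter (\<lambda>i. f i = a) xs)"
proof (induct xs)
  case Nil
  then show ?case using order_power_n_n[of a 0] by simp
next
  case (Cons x xs)
  have nz: "(\<Prod>i\<leftarrow>xs. [:- f i, 1:]) \<noteq> 0" by (auto simp: prod_list_zero_iff)
  have nz2: "[:- f x, 1:] \<noteq> 0" by simp
  have "[:- f x, 1:] * (\<Prod>i\<leftarrow>xs. [:- f i, 1:]) \<noteq> 0" using nz nz2 by (metis mult_eq_0_iff)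
  from order_mult[OF this, of a] Cons show ?case by (auto simp: order_lin)
qed

lemma real_of_cnj: assumes "cnj m = m" shows "complex_of_real (Re m) = m"
proof -
  have "Im m = 0" using arg_cong[OF assms, of Im] by simp
  thus ?thesis by (simp add: complex_eq_iff)
qed

lemma rank_one:
  fixes H P Q :: "complex mat"
  assumes P: "P \<in> carrier_mat n n" and Q: "Q \<in> carrier_mat n n"
    and PQ: "P * Q = 1\<^sub>m n" and QP: "Q * P = 1\<^sub>m n" and HD: "H = P * dg n d * Q"
    and hh: "herm_m H n"
    and j0: "j0 < n" "d j0 = l" and re: "cnj l = l" and uniq: "\<And>a. a < n \<Longrightarrow> d a = l \<Longrightarrow> a = j0"
  shows "col P j0 \<noteq> 0\<^sub>v n \<and> H *\<^sub>v col P j0 = l \<cdot>\<^sub>v col P j0 \<and>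
         P * dg n (\<lambda>a. if a = j0 then c else 0) * Q = (c / (col P j0 \<bullet>c col P j0)) \<cdot>\<^sub>m outer_adj (col P j0)"
proof -
  define D where "D = dg n d"
  define u where "u = col P j0"
  have D: "D \<in> carrier_mat n n" unfolding D_def by simp
  have H: "H \<in> carrier_mat n n" using HD P Q by (metis mult_carrier_mat dg_carrier)
  have u: "u \<in> carrier_vec n" unfolding u_def using P by (metis carrier_matD(1) col_dim)
  have ucol: "u $ b = P $$ (b,j0)" if "b < n" for b
    unfolding u_def using P j0 that by (metis carrier_matD(1,2) index_col)
  have HP: "H * P = P * D"
  proof -
    have PD: "P * D \<in> carrier_mat n n" using P D by simp
    have "H * P = P * D * (Q * P)" unfolding HD D_def[symmetric] by (rule assoc_mult_mat[OF PD Q P])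
    thus ?thesis using QP P D by simp
  qed
  have QH: "Q * H = D * Q"
  proof -
    have PD: "P * D \<in> carrier_mat n n" using P D by simp
    have "Q * H = Q * (P * D) * Q" unfolding HD D_def[symmetric] by (rule assoc_mult_mat[OF Q PD Q, symmetric])
    also have "Q * (P * D) = (Q * P) * D" by (rule assoc_mult_mat[OF Q P D, symmetric])
    finally show ?thesis using QP D Q by simp
  qed
  have Hu: "H *\<^sub>v u = l \<cdot>\<^sub>v u"
  proof -
    have "H *\<^sub>v u = col (H * P) j0" unfolding u_def by (rule col_mult2[OF H P j0(1), symmetric])
    also have "\<dots> = col (P * D) j0" unfolding HP ..
    also have "\<dots> = l \<cdot>\<^sub>v u"
    proof (rule eq_vecI)
      fix i assume "i < dim_vec (l \<cdot>\<^sub>v u)"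
      hence i: "i < n" using u by simp
      show "col (P * D) j0 $ i = (l \<cdot>\<^sub>v u) $ i"
        using dg_mult_right[OF P i j0(1), of d] i j0 P unfolding D_def u_def by (simp add: mult.commute)
    qed (use P D u in simp)
    finally show ?thesis .
  qed
  have onedim: "v = (Q *\<^sub>v v) $ j0 \<cdot>\<^sub>v u" if v: "v \<in> carrier_vec n" and hv: "H *\<^sub>v v = l \<cdot>\<^sub>v v" for v
  proof -
    define x where "x = Q *\<^sub>v v"
    have x: "x \<in> carrier_vec n" unfolding x_def using Q v by simp
    have "D *\<^sub>v x = (D * Q) *\<^sub>v v" unfolding x_def using D Q v by simp
    also have "\<dots> = Q *\<^sub>v (H *\<^sub>v v)" unfolding QH[symmetric] using Q H v by simp
    also have "\<dots> = l \<cdot>\<^sub>v x" unfolding hv x_def by (rule mult_mat_vec[OF Q v])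
    finally have Dx: "D *\<^sub>v x = l \<cdot>\<^sub>v x" .
    have x0: "x $ a = 0" if a: "a < n" "a \<noteq> j0" for a
    proof -
      have "d a * x $ a = l * x $ a" using arg_cong[OF Dx, of "\<lambda>y. y $ a"] dg_mult_vec[OF x a(1), of d] a x
        unfolding D_def by simp
      moreover have "d a \<noteq> l" using uniq a by blast
      ultimately show ?thesis by simp
    qed
    have "v = (P * Q) *\<^sub>v v" using PQ v by simp
    also have "\<dots> = P *\<^sub>v x" unfolding x_def using P Q v by simp
    also have "\<dots> = x $ j0 \<cdot>\<^sub>v u"
    proof (rule eq_vecI)
      fix i assume "i < dim_vec (x $ j0 \<cdot>\<^sub>v u)"
      hence i: "i < n" using u by simp
      have "(P *\<^sub>v x) $ i = (\<Sum>a\<in>{0..<n}. P $$ (i,a) * x $ a)"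
        using P x i by (simp add: scalar_prod_def)
      also have "\<dots> = (\<Sum>a\<in>{0..<n}. if a = j0 then P $$ (i,j0) * x $ j0 else 0)"
        by (rule sum.cong) (auto simp: x0)
      also have "\<dots> = P $$ (i,j0) * x $ j0" using j0 by simp
      finally show "(P *\<^sub>v x) $ i = (x $ j0 \<cdot>\<^sub>v u) $ i" using i P j0 unfolding u_def by simp
    qed (use P u in simp)
    finally show ?thesis unfolding x_def .
  qed
  define wc where "wc = vec n (\<lambda>b. cnj (Q $$ (j0,b)))"
  have wc: "wc \<in> carrier_vec n" unfolding wc_def by simp
  have Hwc: "H *\<^sub>v wc = l \<cdot>\<^sub>v wc"
  proof (rule eq_vecI)
    fix a assume "a < dim_vec (l \<cdot>\<^sub>v wc)"
    hence a: "a < n" using wc by simp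
    have "(H *\<^sub>v wc) $ a = (\<Sum>b\<in>{0..<n}. H $$ (a,b) * cnj (Q $$ (j0,b)))"
      using H a by (simp add: scalar_prod_def wc_def)
    also have "\<dots> = (\<Sum>b\<in>{0..<n}. cnj (Q $$ (j0,b) * H $$ (b,a)))"
    proof (rule sum.cong[OF refl])
      fix b assume "b \<in> {0..<n}"
      hence b: "b < n" by simp
      show "H $$ (a,b) * cnj (Q $$ (j0,b)) = cnj (Q $$ (j0,b) * H $$ (b,a))"
        using herm_mD[OF hh a b] by (simp add: mult.commute)
    qed
    also have "\<dots> = cnj (\<Sum>b\<in>{0..<n}. Q $$ (j0,b) * H $$ (b,a))" by (simp only: cnj_sum)
    also have "(\<Sum>b\<in>{0..<n}. Q $$ (j0,b) * H $$ (b,a)) = (Q * H) $$ (j0,a)"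
      using Q H a j0 by (simp add: scalar_prod_def)
    also have "\<dots> = d j0 * Q $$ (j0,a)" unfolding QH D_def by (rule dg_mult_left[OF Q j0(1) a])
    finally show "(H *\<^sub>v wc) $ a = (l \<cdot>\<^sub>v wc) $ a" using a j0 re by (simp add: wc_def)
  qed (use H wc in simp)
  define t where "t = (Q *\<^sub>v wc) $ j0"
  have wct: "wc = t \<cdot>\<^sub>v u" unfolding t_def by (rule onedim[OF wc Hwc])
  have Qrow: "Q $$ (j0,b) = cnj t * cnj (u $ b)" if b: "b < n" for b
  proof -
    have "wc $ b = t * u $ b" using wct b u by simp
    hence "cnj (Q $$ (j0,b)) = t * u $ b" using b by (simp add: wc_def)
    hence "Q $$ (j0,b) = cnj (t * u $ b)" by (metis complex_cnj_cnj)
    thus ?thesis by simp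
  qed
  have "1 = (Q * P) $$ (j0,j0)" using QP j0 by simp
  also have "\<dots> = (\<Sum>b\<in>{0..<n}. Q $$ (j0,b) * P $$ (b,j0))" using Q P j0 by (simp add: scalar_prod_def)
  also have "\<dots> = (\<Sum>b\<in>{0..<n}. cnj t * (u $ b * cnj (u $ b)))"
    by (rule sum.cong) (auto simp: Qrow ucol)
  also have "\<dots> = cnj t * (u \<bullet>c u)" using u by (simp add: scalar_prod_def sum_distrib_left)
  finally have tu: "cnj t * (u \<bullet>c u) = 1" by simp
  hence uu: "u \<bullet>c u \<noteq> 0" by auto
  hence u0: "u \<noteq> 0\<^sub>v n" by auto
  have ct: "cnj t = 1 / (u \<bullet>c u)" using tu uu by (simp add: field_simps)
  define E where "E = dg n (\<lambda>a. if a = j0 then c else 0)"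
  have E: "E \<in> carrier_mat n n" unfolding E_def by simp
  have "P * E * Q = (c / (u \<bullet>c u)) \<cdot>\<^sub>m outer_adj u"
  proof (rule eq_matI)
    fix a b assume "a < dim_row ((c / (u \<bullet>c u)) \<cdot>\<^sub>m outer_adj u)" "b < dim_col ((c / (u \<bullet>c u)) \<cdot>\<^sub>m outer_adj u)"
    hence a: "a < n" and b: "b < n" using u by (auto simp: outer_adj_def)
    have PE: "(P * E) $$ (a,j) = P $$ (a,j) * (if j = j0 then c else 0)" if "j < n" for j
      unfolding E_def by (rule dg_mult_right[OF P a that])
    have "(P * E * Q) $$ (a,b) = (\<Sum>j\<in>{0..<n}. (P * E) $$ (a,j) * Q $$ (j,b))"
      using P E Q a b by (simp add: scalar_prod_def del: assoc_mult_mat)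
    also have "\<dots> = (\<Sum>j\<in>{0..<n}. if j = j0 then P $$ (a,j0) * c * Q $$ (j0,b) else 0)"
      by (rule sum.cong) (auto simp: PE)
    also have "\<dots> = P $$ (a,j0) * c * Q $$ (j0,b)" using j0 by simp
    also have "\<dots> = (c / (u \<bullet>c u)) * (u $ a * cnj (u $ b))"
      using Qrow[OF b] ct ucol[OF a] by simp
    finally show "(P * E * Q) $$ (a,b) = ((c / (u \<bullet>c u)) \<cdot>\<^sub>m outer_adj u) $$ (a,b)"
      using a b u by (simp add: outer_adj_def)
  qed (use P E Q u in \<open>auto simp: outer_adj_def\<close>)
  thus ?thesis using u0 Hu unfolding u_def E_def by simp
qed

lemma of_real_prod_list_map: "complex_of_real (prod_list (map f xs)) = prod_list (map (\<lambda>x. complex_of_real (f x)) xs)"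
  by (induct xs) auto

lemma dg_cong: "(\<And>a. a < n \<Longrightarrow> f a = g a) \<Longrightarrow> dg n f = dg n g"
  by (rule eq_matI) (auto simp: dg_def)

lemma forward:
  fixes H :: "complex mat"
  assumes H: "H \<in> carrier_mat n n" and adj: "mat_adjoint H = H"
    and lev: "eigenvalue H l" and lord: "Polynomial.order l (char_poly H) = 1"
    and card: "card {m. eigenvalue H m} = k" and k: "2 \<le> k"
  shows "\<exists>\<mu> :: nat \<Rightarrow> real. inj_on \<mu> {1..k} \<and>
             (\<forall>i \<in> {1..k-1}. det (H - complex_of_real (\<mu> i) \<cdot>\<^sub>m 1\<^sub>m n) = 0) \<and>
             (\<exists>\<alpha> \<in> carrier_vec n. \<alpha> \<noteq> 0\<^sub>v n \<and>
                mat_list_prod n (map (\<lambda>i. H - complex_of_real (\<mu> i) \<cdot>\<^sub>m 1\<^sub>m n) [1..<k])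
                  = (complex_of_real (\<Prod>i = 1..k-1. \<mu> k - \<mu> i) / (\<alpha> \<bullet>c \<alpha>)) \<cdot>\<^sub>m outer_adj \<alpha>
                \<and> H *\<^sub>v \<alpha> = complex_of_real (\<mu> k) \<cdot>\<^sub>v \<alpha>)"
proof -
  have hh: "herm_m H n"
  proof (unfold herm_m_def, intro allI impI)
    fix i j assume "i < n" "j < n"
    thus "H $$ (i,j) = cnj (H $$ (j,i))" by (rule herm_entry[OF H adj])
  qed
  obtain P Q d where P: "P \<in> carrier_mat n n" and Q: "Q \<in> carrier_mat n n" and PQ: "P * Q = 1\<^sub>m n"
    and QP: "Q * P = 1\<^sub>m n" and HD: "H = P * dg n d * Q"
    using diagonalize[OF H hh] unfolding dg_def by blast
  have sim: "similar_mat H (dg n d)"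
    by (rule similar_matI[of _ _ P Q n]) (use H P Q PQ QP HD in auto)
  have ut: "upper_triangular (dg n d)" by (simp add: upper_triangular_def dg_def)
  have dm: "diag_mat (dg n d) = map d [0..<n]"
    unfolding diag_mat_def dg_dims by (rule map_cong) (auto simp: dg_def)
  have cp: "char_poly H = (\<Prod>i\<leftarrow>[0..<n]. [:- d i, 1:])"
    unfolding char_poly_similar[OF sim] char_poly_upper_triangular[OF dg_carrier ut] dm
    by (simp add: o_def)
  define S where "S = {m. eigenvalue H m}"
  have S: "S = d ` {0..<n}"
  proof -
    have "eigenvalue H m \<longleftrightarrow> (\<exists>i<n. m = d i)" for m
      unfolding eigenvalue_root_char_poly[OF H] cp poly_prod_list_map prod_list_zero_iff by auto
    thus ?thesis unfolding S_def by auto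
  qed
  have ce: "{i. i < n \<and> d ([0..<n] ! i) = l} = {i. i < n \<and> d i = l}" by auto
  have "length (filter (\<lambda>i. d i = l) [0..<n]) = 1" using lord unfolding cp order_prod_lin .
  hence "card {i. i < n \<and> d ([0..<n] ! i) = l} = 1" unfolding length_filter_conv_card by simp
  hence "card {i. i < n \<and> d i = l} = 1" unfolding ce .
  then obtain j0 where j0set: "{i. i < n \<and> d i = l} = {j0}" by (rule card_1_singletonE)
  hence j0: "j0 < n" "d j0 = l" and uniq: "\<And>a. a < n \<Longrightarrow> d a = l \<Longrightarrow> a = j0" by auto
  have re: "cnj l = l" by (rule eig_real[OF H hh lev])
  have reS: "cnj m = m" if "m \<in> S" for m using eig_real[OF H hh] that unfolding S_def by auto
  define S' where "S' = S - {l}"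
  have finS: "finite S" unfolding S by simp
  have lS: "l \<in> S" unfolding S_def using lev by simp
  have cardS': "card S' = k - 1" unfolding S'_def using finS lS card unfolding S_def[symmetric] by simp
  obtain g where g: "bij_betw g {1..k-1} S'"
    using ex_bij_betw_nat_finite_1[of S'] finS cardS' unfolding S'_def by auto
  define \<mu> where "\<mu> = (\<lambda>i. if i = k then Re l else Re (g i))"
  have \<mu>k: "complex_of_real (\<mu> k) = l" unfolding \<mu>_def using real_of_cnj[OF re] by simp
  have gS': "g i \<in> S'" if "i \<in> {1..k-1}" for i using g that by (auto simp: bij_betw_def)
  have \<mu>i: "complex_of_real (\<mu> i) = g i" if "i \<in> {1..k-1}" for i
  proof -
    have "i \<noteq> k" using that k by auto
    moreover have "cnj (g i) = g i" using reS gS'[OF that] unfolding S'_def by auto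
    ultimately show ?thesis unfolding \<mu>_def using real_of_cnj by simp
  qed
  have inj: "inj_on \<mu> {1..k}"
  proof (rule inj_onI)
    fix i j assume i: "i \<in> {1..k}" and j: "j \<in> {1..k}" and e: "\<mu> i = \<mu> j"
    hence e': "complex_of_real (\<mu> i) = complex_of_real (\<mu> j)" by simp
    show "i = j"
    proof (cases "i = k"; cases "j = k")
      assume ik: "i = k" "j \<noteq> k"
      hence jr: "j \<in> {1..k-1}" using j by auto
      have "g j = l" using e' \<mu>k \<mu>i[OF jr] ik by simp
      moreover have "g j \<noteq> l" using gS'[OF jr] unfolding S'_def by simp
      ultimately show ?thesis by simp
    next
      assume ik: "i \<noteq> k" "j = k"
      hence ir: "i \<in> {1..k-1}" using i by auto
      have "g i = l" using e' \<mu>k \<mu>i[OF ir] ik by simp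
      moreover have "g i \<noteq> l" using gS'[OF ir] unfolding S'_def by simp
      ultimately show ?thesis by simp
    next
      assume "i \<noteq> k" "j \<noteq> k"
      hence ij: "i \<in> {1..k-1}" "j \<in> {1..k-1}" using i j by auto
      hence "g i = g j" using e' \<mu>i by simp
      thus ?thesis using g ij unfolding bij_betw_def inj_on_def by blast
    qed simp
  qed
  have dets: "\<forall>i \<in> {1..k-1}. det (H - complex_of_real (\<mu> i) \<cdot>\<^sub>m 1\<^sub>m n) = 0"
  proof
    fix i assume i: "i \<in> {1..k-1}"
    have "eigenvalue H (complex_of_real (\<mu> i))" using \<mu>i[OF i] gS'[OF i] unfolding S'_def S_def by auto
    thus "det (H - complex_of_real (\<mu> i) \<cdot>\<^sub>m 1\<^sub>m n) = 0" using det_zero_eigenvalue[OF H] by simp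
  qed
  define c where "c = (\<Prod>i\<leftarrow>[1..<k]. l - complex_of_real (\<mu> i))"
  have prods: "(\<Prod>i\<leftarrow>[1..<k]. d a - complex_of_real (\<mu> i)) = (if a = j0 then c else 0)" if a: "a < n" for a
  proof (cases "a = j0")
    case True
    then show ?thesis unfolding c_def using j0 by simp
  next
    case False
    have "d a \<in> S'" unfolding S'_def S using a uniq[OF a] False by auto
    then obtain i where i: "i \<in> {1..k-1}" "g i = d a" using g unfolding bij_betw_def by auto
    have iin: "i \<in> set [1..<k]" using i k by auto
    have z: "0 = d a - complex_of_real (\<mu> i)" using \<mu>i[OF i(1)] i by simp
    have "0 \<in> (\<lambda>i. d a - complex_of_real (\<mu> i)) ` set [1..<k]"
      by (rule image_eqI[where f="\<lambda>i. d a - complex_of_real (\<mu> i)", OF z iin])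
    hence "0 \<in> set (map (\<lambda>i. d a - complex_of_real (\<mu> i)) [1..<k])" by (simp only: set_map)
    hence "(\<Prod>i\<leftarrow>[1..<k]. d a - complex_of_real (\<mu> i)) = 0"
      unfolding prod_list_zero_iff .
    thus ?thesis using False by simp
  qed
  have MLP: "mat_list_prod n (map (\<lambda>i. H - complex_of_real (\<mu> i) \<cdot>\<^sub>m 1\<^sub>m n) [1..<k])
      = P * dg n (\<lambda>a. if a = j0 then c else 0) * Q"
  proof -
    have "dg n (\<lambda>a. \<Prod>i\<leftarrow>[1..<k]. d a - complex_of_real (\<mu> i)) = dg n (\<lambda>a. if a = j0 then c else 0)"
      by (rule dg_cong) (rule prods)
    thus ?thesis unfolding sim_prod[OF P Q dg_carrier PQ QP HD] dg_prod by simp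
  qed
  have c: "c = complex_of_real (\<Prod>i = 1..k-1. \<mu> k - \<mu> i)"
  proof -
    have "{1..k-1} = set [1..<k]" using k by auto
    hence "(\<Prod>i = 1..k-1. \<mu> k - \<mu> i) = (\<Prod>i\<leftarrow>[1..<k]. \<mu> k - \<mu> i)"
      using prod.distinct_set_conv_list[of "[1..<k]" "\<lambda>i. \<mu> k - \<mu> i"] by simp
    hence "complex_of_real (\<Prod>i = 1..k-1. \<mu> k - \<mu> i) = (\<Prod>i\<leftarrow>[1..<k]. complex_of_real (\<mu> k) - complex_of_real (\<mu> i))"
      by (simp add: of_real_prod_list_map)
    thus ?thesis unfolding c_def \<mu>k by simp
  qed
  note R0 = rank_one[OF P Q PQ QP HD hh j0 re uniq, where c=c]
  note R = conjunct1[OF R0] conjunct1[OF conjunct2[OF R0]] conjunct2[OF conjunct2[OF R0]]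
  have colc: "col P j0 \<in> carrier_vec n" using P by (metis carrier_matD(1) col_dim)
  have fin: "mat_list_prod n (map (\<lambda>i. H - complex_of_real (\<mu> i) \<cdot>\<^sub>m 1\<^sub>m n) [1..<k])
                  = (complex_of_real (\<Prod>i = 1..k-1. \<mu> k - \<mu> i) / (col P j0 \<bullet>c col P j0)) \<cdot>\<^sub>m outer_adj (col P j0)"
  proof -
    have "mat_list_prod n (map (\<lambda>i. H - complex_of_real (\<mu> i) \<cdot>\<^sub>m 1\<^sub>m n) [1..<k]) = P * dg n (\<lambda>a. if a = j0 then c else 0) * Q" by (rule MLP)
    also have "\<dots> = (c / (col P j0 \<bullet>c col P j0)) \<cdot>\<^sub>m outer_adj (col P j0)" by (rule R(3))
    finally show ?thesis unfolding c .
  qed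
  have hk: "H *\<^sub>v col P j0 = complex_of_real (\<mu> k) \<cdot>\<^sub>v col P j0" unfolding \<mu>k by (rule R(2))
  show ?thesis
    by (rule exI[of _ \<mu>], intro conjI inj dets bexI[of _ "col P j0"] R(1) fin hk colc)
qed

theorem lemma4p1:
  fixes H :: "complex mat" and n k :: nat
  assumes "psd_mat H n"
    and "least_eigenvalue_simple H"
    and "2 \<le> k" and "k \<le> n"
  shows "(card {m. eigenvalue H m} = k \<longleftrightarrow>
          (\<exists>\<mu> :: nat \<Rightarrow> real. inj_on \<mu> {1..k} \<and>
             (\<forall>i \<in> {1..k-1}. det (H - complex_of_real (\<mu> i) \<cdot>\<^sub>m 1\<^sub>m n) = 0) \<and>
             (\<exists>\<alpha> \<in> carrier_vec n. \<alpha> \<noteq> 0\<^sub>v n \<and>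
                mat_list_prod n (map (\<lambda>i. H - complex_of_real (\<mu> i) \<cdot>\<^sub>m 1\<^sub>m n) [1..<k])
                  = (complex_of_real (\<Prod>i = 1..k-1. \<mu> k - \<mu> i) / (\<alpha> \<bullet>c \<alpha>)) \<cdot>\<^sub>m outer_adj \<alpha>
                \<and> H *\<^sub>v \<alpha> = complex_of_real (\<mu> k) \<cdot>\<^sub>v \<alpha>)))
     \<and> (\<forall>\<mu> :: nat \<Rightarrow> real. (inj_on \<mu> {1..k} \<and>
             (\<forall>i \<in> {1..k-1}. det (H - complex_of_real (\<mu> i) \<cdot>\<^sub>m 1\<^sub>m n) = 0) \<and>
             (\<exists>\<alpha> \<in> carrier_vec n. \<alpha> \<noteq> 0\<^sub>v n \<and>
                mat_list_prod n (map (\<lambda>i. H - complex_of_real (\<mu> i) \<cdot>\<^sub>m 1\<^sub>m n) [1..<k])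
                  = (complex_of_real (\<Prod>i = 1..k-1. \<mu> k - \<mu> i) / (\<alpha> \<bullet>c \<alpha>)) \<cdot>\<^sub>m outer_adj \<alpha>
                \<and> H *\<^sub>v \<alpha> = complex_of_real (\<mu> k) \<cdot>\<^sub>v \<alpha>))
          \<longrightarrow> {m. eigenvalue H m} = (\<lambda>i. complex_of_real (\<mu> i)) ` {1..k})"
proof -
  have H: "H \<in> carrier_mat n n" and adj: "mat_adjoint H = H" using assms(1) unfolding psd_mat_def by auto
  have hh: "herm_m H n"
  proof (unfold herm_m_def, intro allI impI)
    fix i j assume "i < n" "j < n"
    thus "H $$ (i,j) = cnj (H $$ (j,i))" by (rule herm_entry[OF H adj])
  qed
  from assms(2) obtain l where lev: "eigenvalue H l" and sl: "simple_eigenvalue H l"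
    unfolding least_eigenvalue_simple_def by blast
  from sl have lord: "Polynomial.order l (char_poly H) = 1" unfolding simple_eigenvalue_def by (rule conjunct2)
  have k1: "1 \<le> k" using assms(3) by simp
  have conv': "{m. eigenvalue H m} = (\<lambda>i. complex_of_real (\<mu> i)) ` {1..k}"
    if cnd: "inj_on \<mu> {1..k} \<and>
             (\<forall>i \<in> {1..k-1}. det (H - complex_of_real (\<mu> i) \<cdot>\<^sub>m 1\<^sub>m n) = 0) \<and>
             (\<exists>\<alpha> \<in> carrier_vec n. \<alpha> \<noteq> 0\<^sub>v n \<and>
                mat_list_prod n (map (\<lambda>i. H - complex_of_real (\<mu> i) \<cdot>\<^sub>m 1\<^sub>m n) [1..<k])
                  = (complex_of_real (\<Prod>i = 1..k-1. \<mu> k - \<mu> i) / (\<alpha> \<bullet>c \<alpha>)) \<cdot>\<^sub>m outer_adj \<alpha>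
                \<and> H *\<^sub>v \<alpha> = complex_of_real (\<mu> k) \<cdot>\<^sub>v \<alpha>)" for \<mu> :: "nat \<Rightarrow> real"
  proof -
    note sing = conjunct1[OF conjunct2[OF cnd]]
    from conjunct2[OF conjunct2[OF cnd]] obtain \<alpha> where a1: "\<alpha> \<in> carrier_vec n" and rest: "\<alpha> \<noteq> 0\<^sub>v n \<and>
                mat_list_prod n (map (\<lambda>i. H - complex_of_real (\<mu> i) \<cdot>\<^sub>m 1\<^sub>m n) [1..<k])
                  = (complex_of_real (\<Prod>i = 1..k-1. \<mu> k - \<mu> i) / (\<alpha> \<bullet>c \<alpha>)) \<cdot>\<^sub>m outer_adj \<alpha>
                \<and> H *\<^sub>v \<alpha> = complex_of_real (\<mu> k) \<cdot>\<^sub>v \<alpha>" ..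
    note a2 = conjunct1[OF rest]
    note P = conjunct1[OF conjunct2[OF rest]]
    note ev = conjunct2[OF conjunct2[OF rest]]
    show ?thesis by (rule conv[OF H hh sing a1 a2 P ev k1])
  qed
  show ?thesis
  proof (rule conjI)
    show "card {m. eigenvalue H m} = k \<longleftrightarrow> (\<exists>\<mu> :: nat \<Rightarrow> real. inj_on \<mu> {1..k} \<and>
             (\<forall>i \<in> {1..k-1}. det (H - complex_of_real (\<mu> i) \<cdot>\<^sub>m 1\<^sub>m n) = 0) \<and>
             (\<exists>\<alpha> \<in> carrier_vec n. \<alpha> \<noteq> 0\<^sub>v n \<and>
                mat_list_prod n (map (\<lambda>i. H - complex_of_real (\<mu> i) \<cdot>\<^sub>m 1\<^sub>m n) [1..<k])
                  = (complex_of_real (\<Prod>i = 1..k-1. \<mu> k - \<mu> i) / (\<alpha> \<bullet>c \<alpha>)) \<cdot>\<^sub>m outer_adj \<alpha>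
                \<and> H *\<^sub>v \<alpha> = complex_of_real (\<mu> k) \<cdot>\<^sub>v \<alpha>))"
    proof
      assume cd: "card {m. eigenvalue H m} = k"
      show "\<exists>\<mu> :: nat \<Rightarrow> real. inj_on \<mu> {1..k} \<and>
             (\<forall>i \<in> {1..k-1}. det (H - complex_of_real (\<mu> i) \<cdot>\<^sub>m 1\<^sub>m n) = 0) \<and>
             (\<exists>\<alpha> \<in> carrier_vec n. \<alpha> \<noteq> 0\<^sub>v n \<and>
                mat_list_prod n (map (\<lambda>i. H - complex_of_real (\<mu> i) \<cdot>\<^sub>m 1\<^sub>m n) [1..<k])
                  = (complex_of_real (\<Prod>i = 1..k-1. \<mu> k - \<mu> i) / (\<alpha> \<bullet>c \<alpha>)) \<cdot>\<^sub>m outer_adj \<alpha>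
                \<and> H *\<^sub>v \<alpha> = complex_of_real (\<mu> k) \<cdot>\<^sub>v \<alpha>)" by (rule forward[OF H adj lev lord cd assms(3)])
    next
      assume "\<exists>\<mu> :: nat \<Rightarrow> real. inj_on \<mu> {1..k} \<and>
             (\<forall>i \<in> {1..k-1}. det (H - complex_of_real (\<mu> i) \<cdot>\<^sub>m 1\<^sub>m n) = 0) \<and>
             (\<exists>\<alpha> \<in> carrier_vec n. \<alpha> \<noteq> 0\<^sub>v n \<and>
                mat_list_prod n (map (\<lambda>i. H - complex_of_real (\<mu> i) \<cdot>\<^sub>m 1\<^sub>m n) [1..<k])
                  = (complex_of_real (\<Prod>i = 1..k-1. \<mu> k - \<mu> i) / (\<alpha> \<bullet>c \<alpha>)) \<cdot>\<^sub>m outer_adj \<alpha>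
                \<and> H *\<^sub>v \<alpha> = complex_of_real (\<mu> k) \<cdot>\<^sub>v \<alpha>)"
      then obtain \<mu> :: "nat \<Rightarrow> real" where c: "inj_on \<mu> {1..k} \<and>
             (\<forall>i \<in> {1..k-1}. det (H - complex_of_real (\<mu> i) \<cdot>\<^sub>m 1\<^sub>m n) = 0) \<and>
             (\<exists>\<alpha> \<in> carrier_vec n. \<alpha> \<noteq> 0\<^sub>v n \<and>
                mat_list_prod n (map (\<lambda>i. H - complex_of_real (\<mu> i) \<cdot>\<^sub>m 1\<^sub>m n) [1..<k])
                  = (complex_of_real (\<Prod>i = 1..k-1. \<mu> k - \<mu> i) / (\<alpha> \<bullet>c \<alpha>)) \<cdot>\<^sub>m outer_adj \<alpha>
                \<and> H *\<^sub>v \<alpha> = complex_of_real (\<mu> k) \<cdot>\<^sub>v \<alpha>)" ..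
      have inj0: "inj_on \<mu> {1..k}" by (rule conjunct1[OF c])
      have inj: "inj_on (\<lambda>i. complex_of_real (\<mu> i)) {1..k}"
      proof (rule inj_onI)
        fix x y assume x: "x \<in> {1..k}" and y: "y \<in> {1..k}"
          and e: "complex_of_real (\<mu> x) = complex_of_real (\<mu> y)"
        from e have "\<mu> x = \<mu> y" by (rule of_real_eq_iff[THEN iffD1])
        from inj_onD[OF inj0 this x y] show "x = y" .
      qed
      have "card ((\<lambda>i. complex_of_real (\<mu> i)) ` {1..k}) = card {1..k}" by (rule card_image[OF inj])
      also have "card {1..k} = k" by simp
      finally show "card {m. eigenvalue H m} = k" unfolding conv'[OF c] .
    qed
  next
    show "\<forall>\<mu> :: nat \<Rightarrow> real. (inj_on \<mu> {1..k} \<and>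
             (\<forall>i \<in> {1..k-1}. det (H - complex_of_real (\<mu> i) \<cdot>\<^sub>m 1\<^sub>m n) = 0) \<and>
             (\<exists>\<alpha> \<in> carrier_vec n. \<alpha> \<noteq> 0\<^sub>v n \<and>
                mat_list_prod n (map (\<lambda>i. H - complex_of_real (\<mu> i) \<cdot>\<^sub>m 1\<^sub>m n) [1..<k])
                  = (complex_of_real (\<Prod>i = 1..k-1. \<mu> k - \<mu> i) / (\<alpha> \<bullet>c \<alpha>)) \<cdot>\<^sub>m outer_adj \<alpha>
                \<and> H *\<^sub>v \<alpha> = complex_of_real (\<mu> k) \<cdot>\<^sub>v \<alpha>)) \<longrightarrow> {m. eigenvalue H m} = (\<lambda>i. complex_of_real (\<mu> i)) ` {1..k}"
    proof (intro allI impI)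
      fix \<mu> :: "nat \<Rightarrow> real"
      assume c: "inj_on \<mu> {1..k} \<and>
             (\<forall>i \<in> {1..k-1}. det (H - complex_of_real (\<mu> i) \<cdot>\<^sub>m 1\<^sub>m n) = 0) \<and>
             (\<exists>\<alpha> \<in> carrier_vec n. \<alpha> \<noteq> 0\<^sub>v n \<and>
                mat_list_prod n (map (\<lambda>i. H - complex_of_real (\<mu> i) \<cdot>\<^sub>m 1\<^sub>m n) [1..<k])
                  = (complex_of_real (\<Prod>i = 1..k-1. \<mu> k - \<mu> i) / (\<alpha> \<bullet>c \<alpha>)) \<cdot>\<^sub>m outer_adj \<alpha>
                \<and> H *\<^sub>v \<alpha> = complex_of_real (\<mu> k) \<cdot>\<^sub>v \<alpha>)"
      show "{m. eigenvalue H m} = (\<lambda>i. complex_of_real (\<mu> i)) ` {1..k}" by (rule conv'[OF c])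
    qed
  qed
qed

end
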